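(* Let $m,n\in\mathbb{Z}\setminus\{0\}$ and let $(\bar\varphi,D)$ be the graph of groups correspondence over $B=C(\mathbb{T})\oplus C(\mathbb{T})$ of the loop of groups with one vertex, edges $e,\bar e$, all groups $\mathbb{Z}$, $\alpha_e(k)=nk$, $\alpha_{\bar e}(k)=mk$; as a right module $D=C(\mathbb{T})^{|n|}\oplus C(\mathbb{T})^{|m|}\oplus C(\mathbb{T})^{|n|-1}\oplus C(\mathbb{T})^{|m|-1}$ (with $C(\mathbb{T})^0=\{0\}$). Let $(\bar\varphi^{op},D^{*op})$ be the conjugate correspondence. Then $D\cong D^{*op}$ as $B$–$B$-correspondences, where one uses $C(\mathbb{T})^{op}=C(\mathbb{T})\cong\overline{C(\mathbb{T})}$.
   Context: For the loop of groups, $\Sigma_e$ is a transversal of $\mathbb{Z}/n\mathbb{Z}$ in $\mathbb{Z}$ and $\Sigma_{\bar e}$ of $\mathbb{Z}/m\mathbb{Z}$, both containing $0$; $g\cdot\mu$ is the representative of $g+\mu$, $c_e(g,\mu)=(g+\mu-g\cdot\mu)/n$, $c_{\bar e}(g,\mu)=(g+\mu-g\cdot\mu)/m$. Paths of length two: $ee,e\bar e,\bar ee,\bar e\bar e$. With $B_e=B_{\bar e}=C^*(\mathbb{Z})\cong C(\mathbb{T})$, $D_{fx}=\bigoplus_{\mu\in\Sigma_x\setminus\Delta_{fx}}C^*(\mathbb{Z})$ ($\Delta_{fx}=\{0\}$ if $f=\bar x$, else $\emptyset$) with right action in the $B_x$ summand and left $B_f$-action $(\bar\varphi_{fx}(a)\xi)(\mu,h)=\sum_{k\in\mathbb{Z}}a(-k)\xi(\alpha_{\bar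 f}(k)\cdot\mu,c_x(\alpha_{\bar f}(k),\mu)+h)$; $D=\bigoplus D_{fx}$, $\bar\varphi=\bigoplus\bar\varphi_{fx}$. For an $A$–$B$-correspondence $(\phi,X)$, the conjugate space $X^*=\{\flat(x):x\in X\}$ ($\flat$ antilinear) is an $A^{op}$–$B^{op}$-correspondence with $\phi^{op}(a^{op})\flat(x)b^{op}=\flat(\phi(a^* )xb^* )$ and the $B^{op}$-valued inner product obtained from the left $B$-valued inner product of $X^*$; this is $(\phi^{op},X^{*op})$. *)

theory Defs
  imports "HOL-Analysis.Analysis" "HOL-Number_Theory.Cong"
begin

section \<open>The loop of groups: one vertex, edges e and ebar, all groups Z\<close>

datatype edge = E | Ebar

fun bar :: "edge \<Rightarrow> edge" where
  "bar E = Ebar" | "bar Ebar = E"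

fun idx :: "int \<Rightarrow> int \<Rightarrow> edge \<Rightarrow> int" where
  "idx m n E = n" | "idx m n Ebar = m"

definition alpha :: "int \<Rightarrow> int \<Rightarrow> edge \<Rightarrow> int \<Rightarrow> int" where
  "alpha m n x k = idx m n x * k"

definition transversal :: "int \<Rightarrow> int set \<Rightarrow> bool" where
  "transversal N S \<longleftrightarrow> 0 \<in> S \<and> (\<forall>r. \<exists>!s. s \<in> S \<and> [s = r] (mod N))"

definition gact :: "int \<Rightarrow> int set \<Rightarrow> int \<Rightarrow> int \<Rightarrow> int" where
  "gact N S g \<mu> = (THE s. s \<in> S \<and> [s = g + \<mu>] (mod N))"

definition cocyc :: "int \<Rightarrow> int set \<Rightarrow> int \<Rightarrow> int \<Rightarrow> int" where
  "cocyc N S g \<mu> = (g + \<mu> - gact N S g \<mu>) div N"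

section \<open>C*(Z), realised as Fourier coefficient sequences of elements of C(T)\<close>

text \<open>C(T) = continuous 1-periodic functions R -> C; delta_k corresponds to z^k\<close>
definition fcoef :: "(real \<Rightarrow> complex) \<Rightarrow> int \<Rightarrow> complex" where
  "fcoef f k = integral {0..1} (\<lambda>t. f t * exp (- 2 * pi * \<i> * of_int k * of_real t))"

definition cstarZ :: "(int \<Rightarrow> complex) set" where
  "cstarZ = {fcoef f | f. continuous_on UNIV f \<and> (\<forall>t. f (t + 1) = f t)}"

definition conv :: "(int \<Rightarrow> complex) \<Rightarrow> (int \<Rightarrow> complex) \<Rightarrow> int \<Rightarrow> complex" where
  "conv a b k = (\<Sum>\<^sub>\<infinity>j\<in>UNIV. a j * b (k - j))"

definition zstar :: "(int \<Rightarrow> complex) \<Rightarrow> int \<Rightarrow> complex" where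
  "zstar a k = cnj (a (- k))"

type_synonym belt = "edge \<Rightarrow> int \<Rightarrow> complex"

definition Bcar :: "belt set" where
  "Bcar = {b. \<forall>x. b x \<in> cstarZ}"

definition Bstar :: "belt \<Rightarrow> belt" where
  "Bstar b = (\<lambda>x. zstar (b x))"

record 'v corr =
  vcar :: "'v set"
  vadd :: "'v \<Rightarrow> 'v \<Rightarrow> 'v"
  vsmult :: "complex \<Rightarrow> 'v \<Rightarrow> 'v"
  rmul :: "'v \<Rightarrow> belt \<Rightarrow> 'v"
  lmul :: "belt \<Rightarrow> 'v \<Rightarrow> 'v"
  ip :: "'v \<Rightarrow> 'v \<Rightarrow> belt"

text \<open>Conjugate correspondence (phi^op, X^{*op}), with flat taken as the identity on
  the underlying set and B^op = B (B is commutative):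
  lambda flat(x) = flat(conj lambda x), flat(x) b = flat(x b^*), a flat(x) = flat(phi(a^*) x),
  <flat x, flat y> = (left inner product <flat y, flat x>)^op = <y, x>_B.\<close>
definition conj_op :: "'v corr \<Rightarrow> 'v corr" where
  "conj_op X = \<lparr> vcar = vcar X, vadd = vadd X,
     vsmult = (\<lambda>c v. vsmult X (cnj c) v),
     rmul = (\<lambda>v b. rmul X v (Bstar b)),
     lmul = (\<lambda>a v. lmul X (Bstar a) v),
     ip = (\<lambda>v w. ip X w v) \<rparr>"

definition corr_iso :: "'v corr \<Rightarrow> 'w corr \<Rightarrow> bool" where
  "corr_iso X Y \<longleftrightarrow> (\<exists>U. bij_betw U (vcar X) (vcar Y) \<and>
     (\<forall>v\<in>vcar X. \<forall>w\<in>vcar X. U (vadd X v w) = vadd Y (U v) (U w)) \<and>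
     (\<forall>c. \<forall>v\<in>vcar X. U (vsmult X c v) = vsmult Y c (U v)) \<and>
     (\<forall>b\<in>Bcar. \<forall>v\<in>vcar X. U (rmul X v b) = rmul Y (U v) b) \<and>
     (\<forall>a\<in>Bcar. \<forall>v\<in>vcar X. U (lmul X a v) = lmul Y a (U v)) \<and>
     (\<forall>v\<in>vcar X. \<forall>w\<in>vcar X. ip Y (U v) (U w) = ip X v w))"

text \<open>Elements: xi (f,x) mu h = h-th coefficient of the mu-component of the D_{fx} part,
  mu ranging over Sigma_x minus Delta_{fx}.\<close>
type_synonym delt = "edge \<times> edge \<Rightarrow> int \<Rightarrow> int \<Rightarrow> complex"

definition Dind :: "(edge \<Rightarrow> int set) \<Rightarrow> edge \<Rightarrow> edge \<Rightarrow> int set" where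
  "Dind \<Sigma> f x = \<Sigma> x - (if f = bar x then {0} else {})"

definition Dcar :: "(edge \<Rightarrow> int set) \<Rightarrow> delt set" where
  "Dcar \<Sigma> = {\<xi>. \<forall>f x \<mu>. (\<mu> \<in> Dind \<Sigma> f x \<longrightarrow> \<xi> (f, x) \<mu> \<in> cstarZ)
                        \<and> (\<mu> \<notin> Dind \<Sigma> f x \<longrightarrow> \<xi> (f, x) \<mu> = (\<lambda>_. 0))}"

definition Dcorr :: "int \<Rightarrow> int \<Rightarrow> (edge \<Rightarrow> int set) \<Rightarrow> delt corr" where
  "Dcorr m n \<Sigma> = \<lparr> vcar = Dcar \<Sigma>,
     vadd = (\<lambda>\<xi> \<eta> p \<mu> h. \<xi> p \<mu> h + \<eta> p \<mu> h),
     vsmult = (\<lambda>c \<xi> p \<mu> h. c * \<xi> p \<mu> h),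
     rmul = (\<lambda>\<xi> b (f, x) \<mu>. conv (\<xi> (f, x) \<mu>) (b x)),
     lmul = (\<lambda>a \<xi> (f, x) \<mu> h.
        if \<mu> \<in> Dind \<Sigma> f x then
          (\<Sum>\<^sub>\<infinity>k\<in>UNIV. a f (- k) *
             \<xi> (f, x) (gact (idx m n x) (\<Sigma> x) (alpha m n (bar f) k) \<mu>)
                      (cocyc (idx m n x) (\<Sigma> x) (alpha m n (bar f) k) \<mu> + h))
        else 0),
     ip = (\<lambda>\<xi> \<eta> x. (\<lambda>h. \<Sum>f\<in>{E, Ebar}. \<Sum>\<mu>\<in>Dind \<Sigma> f x.
             conv (zstar (\<xi> (f, x) \<mu>)) (\<eta> (f, x) \<mu>) h)) \<rparr>"

end

theory Submission
  imports Defs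
begin


definition rep :: "int \<Rightarrow> int set \<Rightarrow> int \<Rightarrow> int" where
  "rep N S r = (THE s. s \<in> S \<and> [s = r] (mod N))"
definition sig :: "int \<Rightarrow> int set \<Rightarrow> int \<Rightarrow> int" where
  "sig N S \<mu> = rep N S (- \<mu>)"
definition tau :: "int \<Rightarrow> int set \<Rightarrow> int \<Rightarrow> int" where
  "tau N S \<mu> = (sig N S \<mu> + \<mu>) div N"

lemma rep_ex1: "transversal N S \<Longrightarrow> \<exists>!s. s \<in> S \<and> [s = r] (mod N)"
  unfolding transversal_def by blast

lemma rep_prop:
  assumes "transversal N S"
  shows "rep N S r \<in> S \<and> N dvd (rep N S r - r)"
proof -
  have "rep N S r \<in> S \<and> [rep N S r = r] (mod N)"
    unfolding rep_def by (rule theI'[OF rep_ex1[OF assms]])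
  thus ?thesis by (simp add: cong_iff_dvd_diff)
qed

lemma rep_eq:
  assumes "transversal N S" "s \<in> S" "N dvd (s - r)"
  shows "rep N S r = s"
proof -
  have "s \<in> S \<and> [s = r] (mod N)" using assms(2,3) by (simp add: cong_iff_dvd_diff)
  thus ?thesis unfolding rep_def by (rule the1_equality[OF rep_ex1[OF assms(1)]])
qed

lemma gact_rep: "gact N S g \<mu> = rep N S (g + \<mu>)"
  unfolding gact_def rep_def by simp

lemma sig_in: "transversal N S \<Longrightarrow> sig N S \<mu> \<in> S"
  unfolding sig_def using rep_prop by blast

lemma sig_sig: assumes "transversal N S" "\<mu> \<in> S" shows "sig N S (sig N S \<mu>) = \<mu>"
proof -
  have "N dvd (rep N S (-\<mu>) + \<mu>)" using rep_prop[OF assms(1), of "-\<mu>"] by simp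
  hence "N dvd (\<mu> - (- rep N S (-\<mu>)))" by (simp add: add.commute)
  thus ?thesis unfolding sig_def by (intro rep_eq[OF assms])
qed

lemma sig_0: assumes "transversal N S" shows "sig N S 0 = 0"
proof -
  have "0 \<in> S" using assms unfolding transversal_def by blast
  thus ?thesis unfolding sig_def by (intro rep_eq[OF assms]) simp_all
qed

lemma tau_sig: assumes "transversal N S" "\<mu> \<in> S" shows "tau N S (sig N S \<mu>) = tau N S \<mu>"
  unfolding tau_def using sig_sig[OF assms] by (simp add: add.commute)

lemma sig_gact: assumes "transversal N S"
  shows "sig N S (gact N S (- g) \<mu>) = gact N S g (sig N S \<mu>)"
proof -
  have a: "N dvd (rep N S (-g+\<mu>) - (-g+\<mu>))" "N dvd (rep N S (-\<mu>) - (-\<mu>))"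
    using rep_prop[OF assms] by blast+
  have a3: "N dvd (rep N S (g + rep N S (-\<mu>)) - (g + rep N S (-\<mu>)))"
    using rep_prop[OF assms] by blast
  have "N dvd (rep N S (g + rep N S (-\<mu>)) - (- rep N S (-g+\<mu>)))"
    using dvd_add[OF a3 dvd_add[OF a(2) a(1)]] by (simp add: algebra_simps)
  moreover have "rep N S (g + rep N S (-\<mu>)) \<in> S" using rep_prop[OF assms] by blast
  ultimately have "rep N S (- rep N S (-g+\<mu>)) = rep N S (g + rep N S (-\<mu>))"
    by (intro rep_eq[OF assms]) 
  thus ?thesis unfolding sig_def gact_rep .
qed

lemma tau_gact: assumes "transversal N S" "N \<noteq> 0"
  shows "tau N S (gact N S (- g) \<mu>) + cocyc N S (- g) \<mu> = tau N S \<mu> - cocyc N S g (sig N S \<mu>)"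
proof -
  define r where "r = gact N S (- g) \<mu>"
  define s where "s = sig N S \<mu>"
  define q where "q = gact N S g s"
  have e: "sig N S r = q" unfolding r_def q_def s_def by (rule sig_gact[OF assms(1)])
  have d1: "N dvd (sig N S r + r)" unfolding sig_def using rep_prop[OF assms(1), of "-r"] by simp
  have p2: "N dvd (r - (- g + \<mu>))" unfolding r_def gact_rep using rep_prop[OF assms(1), of "-g+\<mu>"] by blast
  have d2: "N dvd (- g + \<mu> - r)" using dvd_minus_iff[THEN iffD2, OF p2] by simp
  have d3: "N dvd (s + \<mu>)" unfolding s_def sig_def using rep_prop[OF assms(1), of "-\<mu>"] by simp
  have p4: "N dvd (q - (g + s))" unfolding q_def gact_rep using rep_prop[OF assms(1), of "g + s"] by blast
  have d4: "N dvd (g + s - q)" using dvd_minus_iff[THEN iffD2, OF p4] by simp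
  have t1: "N * tau N S r = sig N S r + r" unfolding tau_def using d1 by (rule dvd_mult_div_cancel)
  have t2: "N * cocyc N S (- g) \<mu> = - g + \<mu> - r" unfolding cocyc_def r_def[symmetric] using d2 by (rule dvd_mult_div_cancel)
  have t3: "N * tau N S \<mu> = s + \<mu>" unfolding tau_def s_def[symmetric] using d3 by (rule dvd_mult_div_cancel)
  have t4: "N * cocyc N S g s = g + s - q" unfolding cocyc_def q_def[symmetric] using d4 by (rule dvd_mult_div_cancel)
  have "N * (tau N S r + cocyc N S (- g) \<mu>) = N * (tau N S \<mu> - cocyc N S g s)"
    unfolding distrib_left right_diff_distrib t1 t2 t3 t4 e by simp
  hence "tau N S r + cocyc N S (- g) \<mu> = tau N S \<mu> - cocyc N S g s"
    by (rule mult_left_cancel[OF assms(2), THEN iffD1])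
  thus ?thesis unfolding r_def s_def by simp
qed



definition Uf :: "int \<Rightarrow> int \<Rightarrow> (edge \<Rightarrow> int set) \<Rightarrow> delt \<Rightarrow> delt" where
  "Uf m n \<Sigma> \<xi> = (\<lambda>(f, x) \<mu> h. if \<mu> \<in> Dind \<Sigma> f x then
     cnj (\<xi> (f, x) (sig (idx m n x) (\<Sigma> x) \<mu>) (- tau (idx m n x) (\<Sigma> x) \<mu> - h)) else 0)"

lemma cstarZ_refl:
  assumes "a \<in> cstarZ"
  shows "(\<lambda>h. cnj (a (c - h))) \<in> cstarZ"
proof -
  obtain f where f: "a = fcoef f" "continuous_on UNIV f" "\<forall>t. f (t + 1) = f t"
    using assms unfolding cstarZ_def by blast
  define g where "g t = cnj (f t) * exp (2 * pi * \<i> * of_int c * of_real t)" for t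
  have gc: "continuous_on UNIV g" unfolding g_def
    by (intro continuous_intros continuous_on_cnj f(2))
  have gp: "\<forall>t. g (t + 1) = g t"
  proof
    fix t
    have "exp (2 * pi * \<i> * of_int c * of_real (t + 1)) = exp (2 * pi * \<i> * of_int c * of_real t + \<i> * (of_int c * (of_real pi * 2)))"
      by (simp add: algebra_simps)
    also have "\<dots> = exp (2 * pi * \<i> * of_int c * of_real t)" by (rule exp_plus_2pin)
    finally show "g (t + 1) = g t" unfolding g_def using f(3) by simp
  qed
  have "(\<lambda>h. cnj (a (c - h))) = fcoef g"
  proof
    fix h
    have "cnj (a (c - h)) = integral {0..1} (\<lambda>t. cnj (f t * exp (- 2 * pi * \<i> * of_int (c - h) * of_real t)))"
      unfolding f(1) fcoef_def by (rule integral_cnj)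
    also have "\<dots> = integral {0..1} (\<lambda>t. g t * exp (- 2 * pi * \<i> * of_int h * of_real t))"
    proof (rule integral_cong)
      fix t
      have "cnj (f t * exp (- 2 * pi * \<i> * of_int (c - h) * of_real t)) = cnj (f t) * exp (2 * pi * \<i> * of_int (c - h) * of_real t)"
        by (simp add: exp_cnj)
      also have "\<dots> = g t * exp (- 2 * pi * \<i> * of_int h * of_real t)"
        unfolding g_def by (simp add: mult.assoc exp_add[symmetric] algebra_simps)
      finally show "cnj (f t * exp (- 2 * pi * \<i> * of_int (c - h) * of_real t)) = g t * exp (- 2 * pi * \<i> * of_int h * of_real t)" .
    qed
    finally show "cnj (a (c - h)) = fcoef g h" unfolding fcoef_def .
  qed
  thus ?thesis using gc gp unfolding cstarZ_def by blast
qed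


lemma Dind_sub: "\<mu> \<in> Dind \<Sigma> f x \<Longrightarrow> \<mu> \<in> \<Sigma> x"
  unfolding Dind_def by (auto split: if_splits)

lemma sig_Dind:
  assumes tr: "transversal (idx m n x) (\<Sigma> x)" and mu: "\<mu> \<in> Dind \<Sigma> f x"
  shows "sig (idx m n x) (\<Sigma> x) \<mu> \<in> Dind \<Sigma> f x"
proof -
  have S: "\<mu> \<in> \<Sigma> x" using mu by (rule Dind_sub)
  have i: "sig (idx m n x) (\<Sigma> x) \<mu> \<in> \<Sigma> x" by (rule sig_in[OF tr])
  show ?thesis
  proof (cases "f = bar x")
    case True
    hence "\<mu> \<noteq> 0" using mu unfolding Dind_def by simp
    have "sig (idx m n x) (\<Sigma> x) \<mu> \<noteq> 0"
    proof
      assume "sig (idx m n x) (\<Sigma> x) \<mu> = 0"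
      hence "sig (idx m n x) (\<Sigma> x) (sig (idx m n x) (\<Sigma> x) \<mu>) = 0" using sig_0[OF tr] by simp
      thus False using sig_sig[OF tr S] \<open>\<mu> \<noteq> 0\<close> by simp
    qed
    thus ?thesis using i True unfolding Dind_def by simp
  next
    case False
    thus ?thesis using i unfolding Dind_def by simp
  qed
qed

lemma Dcar_in: "\<xi> \<in> Dcar \<Sigma> \<Longrightarrow> \<mu> \<in> Dind \<Sigma> f x \<Longrightarrow> \<xi> (f, x) \<mu> \<in> cstarZ"
  unfolding Dcar_def by blast

lemma Dcar_out: "\<xi> \<in> Dcar \<Sigma> \<Longrightarrow> \<mu> \<notin> Dind \<Sigma> f x \<Longrightarrow> \<xi> (f, x) \<mu> h = 0"
  unfolding Dcar_def by auto

lemma U_S: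
  assumes tr: "transversal (idx m n x) (\<Sigma> x)" and xi: "\<xi> \<in> Dcar \<Sigma>" and nu: "\<nu> \<in> \<Sigma> x"
  shows "Uf m n \<Sigma> \<xi> (f, x) \<nu> h = cnj (\<xi> (f, x) (sig (idx m n x) (\<Sigma> x) \<nu>) (- tau (idx m n x) (\<Sigma> x) \<nu> - h))"
proof (cases "\<nu> \<in> Dind \<Sigma> f x")
  case True thus ?thesis unfolding Uf_def by simp
next
  case False
  hence "\<nu> = 0" "f = bar x" using nu unfolding Dind_def by (auto split: if_splits)
  hence "sig (idx m n x) (\<Sigma> x) \<nu> \<notin> Dind \<Sigma> f x" using sig_0[OF tr] unfolding Dind_def by simp
  hence "\<xi> (f, x) (sig (idx m n x) (\<Sigma> x) \<nu>) (- tau (idx m n x) (\<Sigma> x) \<nu> - h) = 0"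
    by (rule Dcar_out[OF xi])
  thus ?thesis using False unfolding Uf_def by simp
qed

lemma U_Dcar:
  assumes tr: "\<And>x. transversal (idx m n x) (\<Sigma> x)" and xi: "\<xi> \<in> Dcar \<Sigma>"
  shows "Uf m n \<Sigma> \<xi> \<in> Dcar \<Sigma>"
  unfolding Dcar_def
proof (intro CollectI allI conjI impI)
  fix f x \<mu> assume mu: "\<mu> \<in> Dind \<Sigma> f x"
  have "(\<lambda>h. cnj (\<xi> (f, x) (sig (idx m n x) (\<Sigma> x) \<mu>) (- tau (idx m n x) (\<Sigma> x) \<mu> - h))) \<in> cstarZ"
    by (rule cstarZ_refl[OF Dcar_in[OF xi sig_Dind[OF tr mu]]])
  thus "Uf m n \<Sigma> \<xi> (f, x) \<mu> \<in> cstarZ" using mu unfolding Uf_def by simp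
next
  fix f x \<mu> assume "\<mu> \<notin> Dind \<Sigma> f x"
  thus "Uf m n \<Sigma> \<xi> (f, x) \<mu> = (\<lambda>_. 0)" unfolding Uf_def by (simp add: fun_eq_iff)
qed

lemma UU:
  assumes tr: "\<And>x. transversal (idx m n x) (\<Sigma> x)" and xi: "\<xi> \<in> Dcar \<Sigma>"
  shows "Uf m n \<Sigma> (Uf m n \<Sigma> \<xi>) = \<xi>"
proof (intro ext)
  fix p :: "edge \<times> edge" and \<mu> h
  obtain f x where p: "p = (f, x)" by (cases p)
  show "Uf m n \<Sigma> (Uf m n \<Sigma> \<xi>) p \<mu> h = \<xi> p \<mu> h"
  proof (cases "\<mu> \<in> Dind \<Sigma> f x")
    case True
    have S: "\<mu> \<in> \<Sigma> x" using True by (rule Dind_sub)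
    have "Uf m n \<Sigma> (Uf m n \<Sigma> \<xi>) (f, x) \<mu> h =
      cnj (Uf m n \<Sigma> \<xi> (f, x) (sig (idx m n x) (\<Sigma> x) \<mu>) (- tau (idx m n x) (\<Sigma> x) \<mu> - h))"
      using True unfolding Uf_def[of m n \<Sigma> "Uf m n \<Sigma> \<xi>"] by simp
    also have "\<dots> = \<xi> (f, x) \<mu> h"
      using True sig_Dind[OF tr True] sig_sig[OF tr S] tau_sig[OF tr S]
      unfolding Uf_def[of m n \<Sigma> \<xi>] by simp
    finally show ?thesis using p by simp
  next
    case False
    thus ?thesis using p Dcar_out[OF xi False] unfolding Uf_def by simp
  qed
qed


lemma conv_refl1:
  "cnj (conv a b (- t - h)) = conv (\<lambda>i. cnj (a (- t - i))) (zstar b) h"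
proof -
  have bij: "bij_betw (\<lambda>i::int. - t - i) UNIV UNIV"
    by (rule bij_betw_byWitness[where f'="\<lambda>i. - t - i"]) auto
  have "cnj (conv a b (- t - h)) = (\<Sum>\<^sub>\<infinity>j\<in>UNIV. cnj (a j) * cnj (b (- t - h - j)))"
    unfolding conv_def by (simp flip: infsum_cnj)
  also have "\<dots> = (\<Sum>\<^sub>\<infinity>i\<in>UNIV. cnj (a (- t - i)) * cnj (b (- t - h - (- t - i))))"
    by (rule infsum_reindex_bij_betw[OF bij, symmetric])
  also have "\<dots> = conv (\<lambda>i. cnj (a (- t - i))) (zstar b) h"
    unfolding conv_def zstar_def by (simp add: algebra_simps)
  finally show ?thesis .
qed

lemma conv_refl2:
  "conv (zstar (\<lambda>j. cnj (a (- t - j)))) (\<lambda>j. cnj (c (- t - j))) h = conv (zstar c) a h"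
proof -
  have bij: "bij_betw (\<lambda>i::int. h + t - i) UNIV UNIV"
    by (rule bij_betw_byWitness[where f'="\<lambda>i. h + t - i"]) auto
  have "conv (zstar c) a h = (\<Sum>\<^sub>\<infinity>j\<in>UNIV. cnj (c (- j)) * a (h - j))"
    unfolding conv_def zstar_def by simp
  also have "\<dots> = (\<Sum>\<^sub>\<infinity>i\<in>UNIV. cnj (c (- (h + t - i))) * a (h - (h + t - i)))"
    by (rule infsum_reindex_bij_betw[OF bij, symmetric])
  also have "\<dots> = conv (zstar (\<lambda>j. cnj (a (- t - j)))) (\<lambda>j. cnj (c (- t - j))) h"
    unfolding conv_def zstar_def by (rule infsum_cong) (simp add: algebra_simps)
  finally show ?thesis by simp
qed

lemma conv_zero: "conv (\<lambda>_. 0) b h = 0"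
  unfolding conv_def by simp

lemma U_rmul:
  "Uf m n \<Sigma> (rmul (Dcorr m n \<Sigma>) \<xi> b) = rmul (Dcorr m n \<Sigma>) (Uf m n \<Sigma> \<xi>) (Bstar b)"
proof (intro ext)
  fix p :: "edge \<times> edge" and \<mu> h
  obtain f x where p: "p = (f, x)" by (cases p)
  show "Uf m n \<Sigma> (rmul (Dcorr m n \<Sigma>) \<xi> b) p \<mu> h = rmul (Dcorr m n \<Sigma>) (Uf m n \<Sigma> \<xi>) (Bstar b) p \<mu> h"
  proof (cases "\<mu> \<in> Dind \<Sigma> f x")
    case True
    show ?thesis using True unfolding p Uf_def Dcorr_def Bstar_def
      by (simp add: conv_refl1)
  next
    case False
    have "Uf m n \<Sigma> \<xi> (f, x) \<mu> = (\<lambda>_. 0)" using False unfolding Uf_def by (simp add: fun_eq_iff)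
    thus ?thesis using False unfolding p by (simp add: Uf_def Dcorr_def conv_zero)
  qed
qed


lemma sig_bij:
  assumes tr: "transversal (idx m n x) (\<Sigma> x)"
  shows "bij_betw (sig (idx m n x) (\<Sigma> x)) (Dind \<Sigma> f x) (Dind \<Sigma> f x)"
  by (rule bij_betw_byWitness[where f'="sig (idx m n x) (\<Sigma> x)"])
     (auto intro: sig_Dind[where m=m and n=n and x=x and \<Sigma>=\<Sigma>, OF tr] sig_sig[OF tr] Dind_sub)

lemma U_ip:
  assumes tr: "\<And>x. transversal (idx m n x) (\<Sigma> x)" and v: "v \<in> Dcar \<Sigma>" and w: "w \<in> Dcar \<Sigma>"
  shows "ip (Dcorr m n \<Sigma>) (Uf m n \<Sigma> w) (Uf m n \<Sigma> v) = ip (Dcorr m n \<Sigma>) v w"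
proof -
  have inner: "(\<Sum>\<mu>\<in>Dind \<Sigma> f x. conv (zstar (Uf m n \<Sigma> w (f, x) \<mu>)) (Uf m n \<Sigma> v (f, x) \<mu>) h)
     = (\<Sum>\<mu>\<in>Dind \<Sigma> f x. conv (zstar (v (f, x) \<mu>)) (w (f, x) \<mu>) h)" for f x h
  proof -
    let ?s = "sig (idx m n x) (\<Sigma> x)"
    let ?G = "\<lambda>\<mu>. conv (zstar (Uf m n \<Sigma> w (f, x) \<mu>)) (Uf m n \<Sigma> v (f, x) \<mu>) h"
    have "(\<Sum>\<mu>\<in>Dind \<Sigma> f x. ?G \<mu>) = (\<Sum>\<mu>\<in>Dind \<Sigma> f x. ?G (?s \<mu>))"
      by (rule sum.reindex_bij_betw[OF sig_bij[OF tr], symmetric])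
    also have "\<dots> = (\<Sum>\<mu>\<in>Dind \<Sigma> f x. conv (zstar (v (f, x) \<mu>)) (w (f, x) \<mu>) h)"
    proof (rule sum.cong[OF refl])
      fix \<mu> assume mu: "\<mu> \<in> Dind \<Sigma> f x"
      have S: "\<mu> \<in> \<Sigma> x" using mu by (rule Dind_sub)
      have e: "Uf m n \<Sigma> u (f, x) (?s \<mu>) = (\<lambda>j. cnj (u (f, x) \<mu> (- tau (idx m n x) (\<Sigma> x) \<mu> - j)))" for u
        using sig_Dind[OF tr mu] sig_sig[OF tr S] tau_sig[OF tr S] unfolding Uf_def by (simp add: fun_eq_iff)
      show "?G (?s \<mu>) = conv (zstar (v (f, x) \<mu>)) (w (f, x) \<mu>) h"
        unfolding e by (rule conv_refl2)
    qed
    finally show ?thesis .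
  qed
  show ?thesis unfolding Dcorr_def using inner by simp
qed


lemma gact_in: "transversal N S \<Longrightarrow> gact N S g \<mu> \<in> S"
  unfolding gact_rep using rep_prop by blast

lemma alpha_neg: "alpha m n y (- k) = - alpha m n y k"
  unfolding alpha_def by simp

lemma U_lmul:
  assumes tr: "\<And>x. transversal (idx m n x) (\<Sigma> x)" and nz: "\<And>x. idx m n x \<noteq> 0"
    and xi: "\<xi> \<in> Dcar \<Sigma>"
  shows "Uf m n \<Sigma> (lmul (Dcorr m n \<Sigma>) a \<xi>) = lmul (Dcorr m n \<Sigma>) (Bstar a) (Uf m n \<Sigma> \<xi>)"
proof (intro ext)
  fix p :: "edge \<times> edge" and \<mu> h
  obtain f x where p: "p = (f, x)" by (cases p)
  let ?N = "idx m n x" and ?S = "\<Sigma> x"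
  let ?s = "sig ?N ?S \<mu>" and ?t = "tau ?N ?S \<mu>"
  let ?al = "alpha m n (bar f)"
  show "Uf m n \<Sigma> (lmul (Dcorr m n \<Sigma>) a \<xi>) p \<mu> h = lmul (Dcorr m n \<Sigma>) (Bstar a) (Uf m n \<Sigma> \<xi>) p \<mu> h"
  proof (cases "\<mu> \<in> Dind \<Sigma> f x")
    case True
    have sD: "?s \<in> Dind \<Sigma> f x" by (rule sig_Dind[OF tr True])
    define F where "F k = cnj (a f k) *
       cnj (\<xi> (f, x) (sig ?N ?S (gact ?N ?S (?al k) \<mu>)) (- tau ?N ?S (gact ?N ?S (?al k) \<mu>) - (cocyc ?N ?S (?al k) \<mu> + h)))" for k
    have bij: "bij_betw (\<lambda>k::int. - k) UNIV UNIV"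
      by (rule bij_betw_byWitness[where f'="\<lambda>k. - k"]) auto
    have "Uf m n \<Sigma> (lmul (Dcorr m n \<Sigma>) a \<xi>) (f, x) \<mu> h =
       cnj (\<Sum>\<^sub>\<infinity>k\<in>UNIV. a f (- k) * \<xi> (f, x) (gact ?N ?S (?al k) ?s) (cocyc ?N ?S (?al k) ?s + (- ?t - h)))"
      using True sD unfolding Uf_def Dcorr_def by simp
    also have "\<dots> = (\<Sum>\<^sub>\<infinity>k\<in>UNIV. cnj (a f (- k)) * cnj (\<xi> (f, x) (gact ?N ?S (?al k) ?s) (cocyc ?N ?S (?al k) ?s + (- ?t - h))))"
      by (simp flip: infsum_cnj)
    also have "\<dots> = (\<Sum>\<^sub>\<infinity>k\<in>UNIV. F (- k))"
    proof (rule infsum_cong)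
      fix k
      have S: "\<mu> \<in> ?S" using True by (rule Dind_sub)
      have e1: "sig ?N ?S (gact ?N ?S (- ?al k) \<mu>) = gact ?N ?S (?al k) ?s"
        by (rule sig_gact[OF tr])
      have e2: "tau ?N ?S (gact ?N ?S (- ?al k) \<mu>) + cocyc ?N ?S (- ?al k) \<mu> = ?t - cocyc ?N ?S (?al k) ?s"
        by (rule tau_gact[OF tr nz])
      have e3: "- tau ?N ?S (gact ?N ?S (- ?al k) \<mu>) - (cocyc ?N ?S (- ?al k) \<mu> + h) = cocyc ?N ?S (?al k) ?s + (- ?t - h)"
        using e2 by simp
      show "cnj (a f (- k)) * cnj (\<xi> (f, x) (gact ?N ?S (?al k) ?s) (cocyc ?N ?S (?al k) ?s + (- ?t - h))) = F (- k)"
        unfolding F_def alpha_neg e1 e3 by simp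
    qed
    also have "\<dots> = (\<Sum>\<^sub>\<infinity>k\<in>UNIV. F k)"
      by (rule infsum_reindex_bij_betw[OF bij])
    also have "\<dots> = lmul (Dcorr m n \<Sigma>) (Bstar a) (Uf m n \<Sigma> \<xi>) (f, x) \<mu> h"
    proof -
      have "Uf m n \<Sigma> \<xi> (f, x) (gact ?N ?S (?al k) \<mu>) (cocyc ?N ?S (?al k) \<mu> + h) =
        cnj (\<xi> (f, x) (sig ?N ?S (gact ?N ?S (?al k) \<mu>)) (- tau ?N ?S (gact ?N ?S (?al k) \<mu>) - (cocyc ?N ?S (?al k) \<mu> + h)))" for k
        by (rule U_S[OF tr xi gact_in[OF tr]])
      thus ?thesis using True unfolding Dcorr_def F_def Bstar_def zstar_def by simp
    qed
    finally show ?thesis unfolding p .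
  next
    case False
    thus ?thesis unfolding p Uf_def Dcorr_def by simp
  qed
qed


theorem lemma7p1:
  fixes m n :: int and \<Sigma> :: "edge \<Rightarrow> int set"
  assumes "m \<noteq> 0" and "n \<noteq> 0"
    and "transversal n (\<Sigma> E)" and "transversal m (\<Sigma> Ebar)"
  shows "corr_iso (Dcorr m n \<Sigma>) (conj_op (Dcorr m n \<Sigma>))"
proof -
  have tr: "transversal (idx m n x) (\<Sigma> x)" for x using assms by (cases x) auto
  have nz: "idx m n x \<noteq> 0" for x using assms by (cases x) auto
  let ?U = "Uf m n \<Sigma>"
  have vc: "vcar (Dcorr m n \<Sigma>) = Dcar \<Sigma>" "vcar (conj_op (Dcorr m n \<Sigma>)) = Dcar \<Sigma>"
    unfolding conj_op_def Dcorr_def by simp_all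
  have bij: "bij_betw ?U (Dcar \<Sigma>) (Dcar \<Sigma>)"
    by (rule bij_betw_byWitness[where f'="?U"]) (auto intro: UU[OF tr] U_Dcar[OF tr])
  show ?thesis
    unfolding corr_iso_def
  proof (intro exI[of _ ?U] conjI ballI allI)
    show "bij_betw ?U (vcar (Dcorr m n \<Sigma>)) (vcar (conj_op (Dcorr m n \<Sigma>)))" using bij vc by simp
  next
    fix v w assume "v \<in> vcar (Dcorr m n \<Sigma>)" "w \<in> vcar (Dcorr m n \<Sigma>)"
    show "?U (vadd (Dcorr m n \<Sigma>) v w) = vadd (conj_op (Dcorr m n \<Sigma>)) (?U v) (?U w)"
      unfolding conj_op_def Dcorr_def Uf_def by (auto simp: fun_eq_iff)
  next
    fix c v assume "v \<in> vcar (Dcorr m n \<Sigma>)"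
    show "?U (vsmult (Dcorr m n \<Sigma>) c v) = vsmult (conj_op (Dcorr m n \<Sigma>)) c (?U v)"
      unfolding conj_op_def Dcorr_def Uf_def by (auto simp: fun_eq_iff)
  next
    fix b v assume "b \<in> Bcar" "v \<in> vcar (Dcorr m n \<Sigma>)"
    show "?U (rmul (Dcorr m n \<Sigma>) v b) = rmul (conj_op (Dcorr m n \<Sigma>)) (?U v) b"
      unfolding conj_op_def using U_rmul by simp
  next
    fix a v assume "a \<in> Bcar" "v \<in> vcar (Dcorr m n \<Sigma>)"
    hence "v \<in> Dcar \<Sigma>" using vc by simp
    thus "?U (lmul (Dcorr m n \<Sigma>) a v) = lmul (conj_op (Dcorr m n \<Sigma>)) a (?U v)"
      unfolding conj_op_def using U_lmul[OF tr nz] by simp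
  next
    fix v w assume "v \<in> vcar (Dcorr m n \<Sigma>)" "w \<in> vcar (Dcorr m n \<Sigma>)"
    hence "v \<in> Dcar \<Sigma>" "w \<in> Dcar \<Sigma>" using vc by simp_all
    thus "ip (conj_op (Dcorr m n \<Sigma>)) (?U v) (?U w) = ip (Dcorr m n \<Sigma>) v w"
      unfolding conj_op_def using U_ip[OF tr] by simp
  qed
qed

end
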